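(* Let $H_1,H_2$ be non-empty graphs with $H_1\ne H_2$ and $m_2(H_1)>m_2(H_2)>1$, such that $H_2$ is strictly $2$-balanced and $H_1$ is strictly balanced with respect to $d_2(\cdot,H_2)$. Let $F$ be a graph and $\hat{e}\in E(F)$. Then for any $J\in\mathcal{H}(F,\hat{e},H_1,H_2)\setminus\mathcal{H}^*(F,\hat{e},H_1,H_2)$ and any $J^*\in\mathcal{H}^*(F,\hat{e},H_1,H_2)$, \[\frac{e^+(J)}{v^+(J)} > \frac{e^+(J^* )}{v^+(J^* )}.\]
   Context: For a graph $H$ write $v_H=|V(H)|$, $e_H=|E(H)|$; $d_2(H) = (e_H-1)/(v_H-2)$ if $H$ is non-empty and $v_H \geq 3$, $d_2(K_2)=1/2$, $d_2(H)=0$ otherwise; $m_2(H)=\max_{J\subseteq H} d_2(J)$; $H$ is strictly $2$-balanced if $d_2(J)<m_2(H)$ for all proper subgraphs $J\subsetneq H$. $d_2(H_1,H_2) = e_{H_1}/(v_{H_1} - 2 + 1/m_2(H_2))$ if $H_2$ is non-empty and $v_{H_1}\ge2$, and $0$ otherwise; $m_2(H_1,H_2)=\max_{J\subseteq H_1} d_2(J,H_2)$; $H_1$ is strictly balanced with respect to $d_2(\cdot,H_2)$ if $d_2(J,H_2)<m_2(H_1,H_2)$ for all proper subgraphs $J\subsetneq H_1$. $\mathcal{H}(F,\hat{e},H_1,H_2)$ is the family of graphs $J$ obtained from $F$ as follows: attach a copy $H_{\hat e}$ of $H_2$ to $F$ with $E(H_{\hat e})\cap E(F)=\{\hat e\}$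 and $V(H_{\hat e})\cap V(F)=\hat e$ (any edge of $H_2$ in any orientation may be identified with $\hat e$); then for each edge $f\in E(H_{\hat e})\setminus\{\hat e\}$ attach a copy $H_f$ of $H_1$ to $F\cup H_{\hat e}$ (and to previously attached copies) such that $E(F\cup H_{\hat e})\cap E(H_f)=\{f\}$ and $(V(F)\setminus\hat e)\cap V(H_f)=\emptyset$. (The copies $H_f$ may share vertices and edges with each other and vertices with $H_{\hat e}$.) For such $J$, the inner edges are $E_J=E(H_{\hat e})\setminus\{\hat e\}$, and for $f\in E_J$ let $U_J(f)=V(H_f)\setminus f$ and $D_J(f)=E(H_f)\setminus\{f\}$. $\mathcal{H}^*(F,\hat e,H_1,H_2)\subseteq\mathcal{H}(F,\hat e,H_1,H_2)$ consists of those $J$ (with their construction) such that $U_J(f_1)\cap U_J(f_2)=\emptyset$ and $D_J(f_1)\cap D_J(f_2)=\emptyset$ for all distinct $f_1,f_2\in E_J$, and $U_J(f)\cap V(H_{\hat e})=\emptyset$ for all $f\in E_J$. For $J\in\mathcal{H}(F,\hat e,H_1,H_2)$, $v^+(J)=|V(J)\setminus V(F)|$ and $e^+(J)=|E(J)\setminus E(F)|$. *)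

theory Defs
  imports Complex_Main
begin

type_synonym 'a graph = "'a set \<times> 'a set set"

definition verts :: "'a graph \<Rightarrow> 'a set" where "verts G = fst G"
definition edges :: "'a graph \<Rightarrow> 'a set set" where "edges G = snd G"

definition wf_graph :: "'a graph \<Rightarrow> bool" where
  "wf_graph G \<longleftrightarrow> finite (verts G) \<and> (\<forall>e\<in>edges G. e \<subseteq> verts G \<and> card e = 2)"

definition vnum :: "'a graph \<Rightarrow> nat" where "vnum G = card (verts G)"
definition enum :: "'a graph \<Rightarrow> nat" where "enum G = card (edges G)"

definition nonempty_graph :: "'a graph \<Rightarrow> bool" where
  "nonempty_graph G \<longleftrightarrow> edges G \<noteq> {}"

definition subgraph :: "'a graph \<Rightarrow> 'a graph \<Rightarrow> bool" where
  "subgraph J G \<longleftrightarrow> wf_graph J \<and> verts J \<subseteq> verts G \<and> edges J \<subseteq> edges G"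

definition d2 :: "'a graph \<Rightarrow> real" where
  "d2 H = (if nonempty_graph H \<and> vnum H \<ge> 3 then (real (enum H) - 1) / (real (vnum H) - 2)
           else if vnum H = 2 \<and> enum H = 1 then 1/2 else 0)"

definition m2 :: "'a graph \<Rightarrow> real" where
  "m2 H = Max (d2 ` {J. subgraph J H})"

definition strictly_2_balanced :: "'a graph \<Rightarrow> bool" where
  "strictly_2_balanced H \<longleftrightarrow> (\<forall>J. subgraph J H \<and> J \<noteq> H \<longrightarrow> d2 J < m2 H)"

definition d2_asym :: "'a graph \<Rightarrow> 'b graph \<Rightarrow> real" where
  "d2_asym H1 H2 = (if nonempty_graph H2 \<and> vnum H1 \<ge> 2
      then real (enum H1) / (real (vnum H1) - 2 + 1 / m2 H2) else 0)"

definition m2_asym :: "'a graph \<Rightarrow> 'b graph \<Rightarrow> real" where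
  "m2_asym H1 H2 = Max ((\<lambda>J. d2_asym J H2) ` {J. subgraph J H1})"

definition strictly_balanced_wrt :: "'a graph \<Rightarrow> 'b graph \<Rightarrow> bool" where
  "strictly_balanced_wrt H1 H2 \<longleftrightarrow>
     (\<forall>J. subgraph J H1 \<and> J \<noteq> H1 \<longrightarrow> d2_asym J H2 < m2_asym H1 H2)"

definition iso :: "'b graph \<Rightarrow> 'a graph \<Rightarrow> bool" where
  "iso G H \<longleftrightarrow> (\<exists>\<phi>. bij_betw \<phi> (verts G) (verts H) \<and>
      (\<forall>u\<in>verts G. \<forall>v\<in>verts G. {u, v} \<in> edges G \<longleftrightarrow> {\<phi> u, \<phi> v} \<in> edges H))"

text \<open>A construction of J from F, \<open>\<hat>e\<close>: Hhat is the copy of H2, Hf f the copy of H1 attached at f.\<close>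
definition construction ::
  "'a graph \<Rightarrow> 'a set \<Rightarrow> 'b graph \<Rightarrow> 'c graph \<Rightarrow> 'a graph \<Rightarrow> 'a graph \<Rightarrow> ('a set \<Rightarrow> 'a graph) \<Rightarrow> bool" where
  "construction F eh H1 H2 J Hhat Hf \<longleftrightarrow>
     wf_graph Hhat \<and> iso H2 Hhat \<and>
     edges Hhat \<inter> edges F = {eh} \<and> verts Hhat \<inter> verts F = eh \<and>
     (\<forall>f \<in> edges Hhat - {eh}.
        wf_graph (Hf f) \<and> iso H1 (Hf f) \<and>
        edges (Hf f) \<inter> (edges F \<union> edges Hhat) = {f} \<and>
        (verts F - eh) \<inter> verts (Hf f) = {}) \<and>
     J = (verts F \<union> verts Hhat \<union> (\<Union>f \<in> edges Hhat - {eh}. verts (Hf f)),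
          edges F \<union> edges Hhat \<union> (\<Union>f \<in> edges Hhat - {eh}. edges (Hf f)))"

definition star_conditions :: "'a set \<Rightarrow> 'a graph \<Rightarrow> ('a set \<Rightarrow> 'a graph) \<Rightarrow> bool" where
  "star_conditions eh Hhat Hf \<longleftrightarrow>
     (\<forall>f1 \<in> edges Hhat - {eh}. \<forall>f2 \<in> edges Hhat - {eh}. f1 \<noteq> f2 \<longrightarrow>
        (verts (Hf f1) - f1) \<inter> (verts (Hf f2) - f2) = {} \<and>
        (edges (Hf f1) - {f1}) \<inter> (edges (Hf f2) - {f2}) = {}) \<and>
     (\<forall>f \<in> edges Hhat - {eh}. (verts (Hf f) - f) \<inter> verts Hhat = {})"

definition family_H :: "'a graph \<Rightarrow> 'a set \<Rightarrow> 'b graph \<Rightarrow> 'c graph \<Rightarrow> 'a graph set" where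
  "family_H F eh H1 H2 = {J. \<exists>Hhat Hf. construction F eh H1 H2 J Hhat Hf}"

definition family_Hstar :: "'a graph \<Rightarrow> 'a set \<Rightarrow> 'b graph \<Rightarrow> 'c graph \<Rightarrow> 'a graph set" where
  "family_Hstar F eh H1 H2 =
     {J. \<exists>Hhat Hf. construction F eh H1 H2 J Hhat Hf \<and> star_conditions eh Hhat Hf}"

definition vplus :: "'a graph \<Rightarrow> 'a graph \<Rightarrow> nat" where
  "vplus F J = card (verts J - verts F)"
definition eplus :: "'a graph \<Rightarrow> 'a graph \<Rightarrow> nat" where
  "eplus F J = card (edges J - edges F)"

end

theory Submission
  imports Defs
begin

locale flower =
  fixes I :: "'k set" and Z :: "'a set" and HV :: "'k \<Rightarrow> 'a set"
    and HE :: "'k \<Rightarrow> 'a set set" and fe :: "'k \<Rightarrow> 'a set"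
    and lam m :: real and v1 e1 :: nat
  assumes finI: "finite I" and finZ: "finite Z"
    and finHV: "\<And>i. i \<in> I \<Longrightarrow> finite (HV i)"
    and cardHV: "\<And>i. i \<in> I \<Longrightarrow> card (HV i) = v1"
    and cardHE: "\<And>i. i \<in> I \<Longrightarrow> card (HE i) = e1"
    and HEsub: "\<And>i e. i \<in> I \<Longrightarrow> e \<in> HE i \<Longrightarrow> e \<subseteq> HV i \<and> card e = 2"
    and fe_in: "\<And>i. i \<in> I \<Longrightarrow> fe i \<in> HE i"
    and fe_Z: "\<And>i. i \<in> I \<Longrightarrow> fe i \<subseteq> Z"
    and fe_inj: "inj_on fe I"
    and bound: "\<And>i W EK. i \<in> I \<Longrightarrow> W \<subseteq> HV i \<Longrightarrow> EK \<subseteq> HE i \<Longrightarrow> (\<forall>e\<in>EK. e \<subseteq> W)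
        \<Longrightarrow> card W \<ge> 2 \<Longrightarrow> real (card EK) \<le> lam * (real (card W) - 2 + 1/m)"
    and e1_eq: "real e1 = lam * (real v1 - 2 + 1/m)"
    and H2b: "\<And>S. S \<subseteq> I \<Longrightarrow> S \<noteq> {} \<Longrightarrow> card (\<Union>(HV ` S) \<inter> Z) \<ge> 3
        \<Longrightarrow> real (card S) - 1 < m * (real (card (\<Union>(HV ` S) \<inter> Z)) - 2)"
    and lam_pos: "lam > 0" and m_pos: "m > 0"
begin

definition UV where "UV S = \<Union>(HV ` S)"
definition UE where "UE S = \<Union>(HE ` S)"
definition XX where "XX S = UV S - Z"
definition ZZ where "ZZ S = UV S \<inter> Z"
definition T where "T S = real (card (UE S)) - lam * real (card (XX S)) - lam * real (card S) / m"
definition Om where "Om S = real (card (UE S)) - lam * (real (card (UV S)) - 2 + 1/m)"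
definition SL where "SL \<longleftrightarrow> (\<forall>i\<in>I. HV i \<inter> Z = fe i) \<and>
   (\<forall>i\<in>I. \<forall>j\<in>I. i \<noteq> j \<longrightarrow> (HV i - Z) \<inter> (HV j - Z) = {})"

lemma finHE: "i \<in> I \<Longrightarrow> finite (HE i)"
proof -
  assume i: "i \<in> I"
  have "HE i \<subseteq> Pow (HV i)" using HEsub[OF i] by auto
  then show ?thesis using finHV[OF i] finite_subset by blast
qed

lemma finS: "S \<subseteq> I \<Longrightarrow> finite S" using finI finite_subset by blast

lemma finUV: "S \<subseteq> I \<Longrightarrow> finite (UV S)"
  unfolding UV_def using finHV finS by (simp add: subset_iff)

lemma finUE: "S \<subseteq> I \<Longrightarrow> finite (UE S)"
  unfolding UE_def using finHE finS by (simp add: subset_iff)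

lemma card_UV_split: "S \<subseteq> I \<Longrightarrow> card (UV S) = card (XX S) + card (ZZ S)"
proof -
  assume S: "S \<subseteq> I"
  have "UV S = XX S \<union> ZZ S" "XX S \<inter> ZZ S = {}" unfolding XX_def ZZ_def by auto
  moreover have "finite (XX S)" "finite (ZZ S)" using finUV[OF S] unfolding XX_def ZZ_def by auto
  ultimately show ?thesis by (metis card_Un_disjoint)
qed

lemma T_Om: "S \<subseteq> I \<Longrightarrow> T S = Om S + lam * (real (card (ZZ S)) - 2 + 1/m - real (card S) / m)"
  unfolding T_def Om_def using card_UV_split[of S] by (simp add: algebra_simps)

lemma fe_sub_ZZ: "S \<subseteq> I \<Longrightarrow> i \<in> S \<Longrightarrow> fe i \<subseteq> ZZ S"
  unfolding ZZ_def UV_def using HEsub fe_in fe_Z by blast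

lemma card_fe: "i \<in> I \<Longrightarrow> card (fe i) = 2" using HEsub fe_in by blast

lemma fin_fe: "i \<in> I \<Longrightarrow> finite (fe i)"
proof -
  assume i: "i \<in> I"
  have "fe i \<subseteq> HV i" using HEsub[OF i fe_in[OF i]] by blast
  then show ?thesis using finHV[OF i] finite_subset by blast
qed

lemma beta_nonneg:
  assumes S: "S \<subseteq> I" "S \<noteq> {}"
  shows "real (card (ZZ S)) - 2 + 1/m - real (card S) / m \<ge> 0"
    and "card (ZZ S) \<ge> 3 \<Longrightarrow> real (card (ZZ S)) - 2 + 1/m - real (card S) / m > 0"
proof -
  obtain i where i: "i \<in> S" using S by blast
  have iI: "i \<in> I" using i S(1) by blast
  have finZZ: "finite (ZZ S)" using finUV[OF S(1)] unfolding ZZ_def by simp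
  have "card (fe i) \<le> card (ZZ S)" by (rule card_mono[OF finZZ fe_sub_ZZ[OF S(1) i]])
  then have c2: "card (ZZ S) \<ge> 2" using card_fe[OF iI] by simp
  show gt: "card (ZZ S) \<ge> 3 \<Longrightarrow> real (card (ZZ S)) - 2 + 1/m - real (card S) / m > 0"
  proof -
    assume c3: "card (ZZ S) \<ge> 3"
    have zz: "ZZ S = \<Union>(HV ` S) \<inter> Z" by (simp add: ZZ_def UV_def)
    have "real (card S) - 1 < m * (real (card (ZZ S)) - 2)"
      using H2b[OF S] c3 unfolding zz by blast
    then have "(real (card S) - 1) / m < real (card (ZZ S)) - 2"
      using pos_divide_less_eq[OF m_pos] by (simp add: mult.commute)
    moreover have "(real (card S) - 1) / m = real (card S) / m - 1/m" by (rule diff_divide_distrib)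
    ultimately show ?thesis by linarith
  qed
  show "real (card (ZZ S)) - 2 + 1/m - real (card S) / m \<ge> 0"
  proof (cases "card (ZZ S) \<ge> 3")
    case True then show ?thesis using gt by (meson less_imp_le)
  next
    case False
    then have e2: "card (ZZ S) = 2" using c2 by linarith
    have all: "fe j = ZZ S" if j: "j \<in> S" for j
    proof -
      have jI: "j \<in> I" using j S(1) by blast
      show ?thesis by (rule card_subset_eq[OF finZZ fe_sub_ZZ[OF S(1) j]]) (simp add: card_fe[OF jI] e2)
    qed
    have "S = {i}"
    proof
      show "S \<subseteq> {i}"
      proof
        fix j assume j: "j \<in> S"
        have "fe j = fe i" using all[OF j] all[OF i] by simp
        then show "j \<in> {i}" using fe_inj j i S(1) unfolding inj_on_def by blast
      qed
      show "{i} \<subseteq> S" using i by blast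
    qed
    then show ?thesis using e2 by simp
  qed
qed

lemma UE_empty[simp]: "UE {} = {}" and XX_empty[simp]: "XX {} = {}"
  unfolding UE_def XX_def UV_def by auto

lemma T_empty: "T {} = 0" unfolding T_def by simp

lemma Om_single: "i \<in> I \<Longrightarrow> Om {i} = 0"
  unfolding Om_def UE_def UV_def using cardHE cardHV e1_eq by simp

lemma card_Un_Int_real:
  "finite A \<Longrightarrow> finite B \<Longrightarrow> real (card (A \<union> B)) = real (card A) + real (card B) - real (card (A \<inter> B))"
  using card_Un_Int[of A B] by simp

lemma edge_in_UV: "B \<subseteq> I \<Longrightarrow> e \<in> UE B \<Longrightarrow> e \<subseteq> UV B"
proof -
  assume B: "B \<subseteq> I" and e: "e \<in> UE B"
  then obtain b where b: "b \<in> B" "e \<in> HE b" unfolding UE_def by blast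
  then have "e \<subseteq> HV b" using HEsub B by blast
  then show ?thesis using b(1) unfolding UV_def by blast
qed

lemma Om_add:
  assumes B: "B \<subseteq> I" and j: "j \<in> I" and c: "card (HV j \<inter> UV B) \<ge> 2"
  shows "Om (insert j B) \<ge> Om B"
proof -
  define W where "W = HV j \<inter> UV B"
  define EK where "EK = HE j \<inter> UE B"
  have sub: "\<forall>e\<in>EK. e \<subseteq> W"
  proof
    fix e assume e: "e \<in> EK"
    have "e \<subseteq> HV j" using HEsub[OF j] e unfolding EK_def by blast
    moreover have "e \<subseteq> UV B" using edge_in_UV[OF B] e unfolding EK_def by blast
    ultimately show "e \<subseteq> W" unfolding W_def by blast
  qed
  have bd: "real (card EK) \<le> lam * (real (card W) - 2 + 1/m)"
    by (rule bound[OF j _ _ sub]) (use c in \<open>simp_all add: W_def EK_def\<close>)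
  have u1: "UE (insert j B) = HE j \<union> UE B" unfolding UE_def by simp
  have u2: "UV (insert j B) = HV j \<union> UV B" unfolding UV_def by simp
  have e: "real (card (UE (insert j B))) = real e1 + real (card (UE B)) - real (card EK)"
    unfolding u1 EK_def card_Un_Int_real[OF finHE[OF j] finUE[OF B]] cardHE[OF j] ..
  have v: "real (card (UV (insert j B))) = real v1 + real (card (UV B)) - real (card W)"
    unfolding u2 W_def card_Un_Int_real[OF finHV[OF j] finUV[OF B]] cardHV[OF j] ..
  have "Om (insert j B) - Om B = real e1 - real (card EK) - lam * (real v1 - real (card W))"
    unfolding Om_def e v by (simp add: algebra_simps)
  also have "\<dots> \<ge> real e1 - lam * (real (card W) - 2 + 1/m) - lam * (real v1 - real (card W))"
    using bd by simp
  also have "real e1 - lam * (real (card W) - 2 + 1/m) - lam * (real v1 - real (card W)) = 0"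
    using e1_eq by (simp add: algebra_simps)
  finally show ?thesis by simp
qed

lemma split:
  assumes S: "S \<subseteq> I" and B: "B \<subseteq> S" and cl: "\<forall>j\<in>S-B. card (HV j \<inter> UV B) \<le> 1"
  shows "T S = T B + T (S - B) + lam * real (card (XX B \<inter> XX (S - B)))"
proof -
  have BI: "B \<subseteq> I" using S B by blast
  have BI2: "S - B \<subseteq> I" using S by blast
  have disj: "UE B \<inter> UE (S - B) = {}"
  proof (rule ccontr)
    assume "UE B \<inter> UE (S - B) \<noteq> {}"
    then obtain e where e1: "e \<in> UE B" and e2: "e \<in> UE (S - B)" by blast
    then obtain j where j: "j \<in> S - B" "e \<in> HE j" unfolding UE_def by blast
    have jI: "j \<in> I" using j(1) S by blast
    have "e \<subseteq> HV j" "card e = 2" using HEsub[OF jI j(2)] by auto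
    moreover have "e \<subseteq> UV B" using edge_in_UV[OF BI e1] .
    ultimately have sub: "e \<subseteq> HV j \<inter> UV B" and ce: "card e = 2" by auto
    have "card e \<le> card (HV j \<inter> UV B)" using card_mono[OF _ sub] finHV[OF jI] by blast
    moreover have "card (HV j \<inter> UV B) \<le> 1" using cl j(1) by blast
    ultimately show False using ce by linarith
  qed
  have ue: "UE S = UE B \<union> UE (S - B)" unfolding UE_def using B by blast
  have xx: "XX S = XX B \<union> XX (S - B)" unfolding XX_def UV_def using B by blast
  have c1: "real (card (UE S)) = real (card (UE B)) + real (card (UE (S - B)))"
    unfolding ue card_Un_disjoint[OF finUE[OF BI] finUE[OF BI2] disj] by simp
  have fx1: "finite (XX B)" using finUV[OF BI] unfolding XX_def by simp
  have fx2: "finite (XX (S - B))" using finUV[OF BI2] unfolding XX_def by simp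
  have c2: "real (card (XX S)) = real (card (XX B)) + real (card (XX (S - B))) - real (card (XX B \<inter> XX (S - B)))"
    unfolding xx by (rule card_Un_Int_real[OF fx1 fx2])
  have fB: "finite B" using finS[OF BI] .
  have c3: "real (card S) = real (card B) + real (card (S - B))"
  proof -
    have "card S = card B + card (S - B)"
      using card_Un_disjoint[OF fB finS[OF BI2], of] B by (metis Diff_disjoint Diff_partition)
    then show ?thesis by simp
  qed
  show ?thesis unfolding T_def c1 c2 c3 by (simp add: algebra_simps add_divide_distrib)
qed

lemma decomp:
  assumes S: "S \<subseteq> I" and i0: "i0 \<in> S"
  shows "\<exists>B. B \<subseteq> S \<and> i0 \<in> B \<and> Om B \<ge> 0 \<and> (\<forall>j\<in>S-B. card (HV j \<inter> UV B) \<le> 1)"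
proof -
  define C where "C = {B. B \<subseteq> S \<and> i0 \<in> B \<and> Om B \<ge> 0}"
  have fin: "finite C" by (rule finite_subset[of _ "Pow S"]) (auto simp: C_def finS[OF S])
  have i0I: "i0 \<in> I" using i0 S by blast
  have ne: "{i0} \<in> C" unfolding C_def using Om_single[OF i0I] i0 by simp
  define M where "M = Max (card ` C)"
  have "M \<in> card ` C" unfolding M_def using fin ne by (intro Max_in) auto
  then obtain B where B: "B \<in> C" "card B = M" by blast
  have mx: "card B' \<le> card B" if "B' \<in> C" for B'
    unfolding B(2) M_def using fin that by (intro Max_ge) auto
  have BS: "B \<subseteq> S" and Bi: "i0 \<in> B" and BO: "Om B \<ge> 0" using B(1) unfolding C_def by auto
  have BI: "B \<subseteq> I" using BS S by blast
  have fB: "finite B" using finS[OF BI] .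
  have cl: "\<forall>j\<in>S-B. card (HV j \<inter> UV B) \<le> 1"
  proof (rule ccontr)
    assume "\<not> ?thesis"
    then obtain j where j: "j \<in> S - B" and cj: "\<not> card (HV j \<inter> UV B) \<le> 1" by blast
    have jI: "j \<in> I" using j S by blast
    have "Om (insert j B) \<ge> Om B" by (rule Om_add[OF BI jI]) (use cj in linarith)
    then have "insert j B \<in> C" unfolding C_def using BS Bi BO j by auto
    then have "card (insert j B) \<le> card B" by (rule mx)
    then show False using j fB by simp
  qed
  show ?thesis using BS Bi BO cl by blast
qed

lemma T_nonneg: "S \<subseteq> I \<Longrightarrow> T S \<ge> 0"
proof (induction "card S" arbitrary: S rule: less_induct)
  case less
  show ?case
  proof (cases "S = {}")
    case True then show ?thesis using T_empty by simp
  next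
    case False
    then obtain i0 where i0: "i0 \<in> S" by blast
    obtain B where B: "B \<subseteq> S" "i0 \<in> B" "Om B \<ge> 0" "\<forall>j\<in>S-B. card (HV j \<inter> UV B) \<le> 1"
      using decomp[OF less.prems i0] by blast
    have BI: "B \<subseteq> I" using B(1) less.prems by blast
    have Bne: "B \<noteq> {}" using B(2) by blast
    have be: "real (card (ZZ B)) - 2 + 1/m - real (card B) / m \<ge> 0" by (rule beta_nonneg(1)[OF BI Bne])
    have "lam * (real (card (ZZ B)) - 2 + 1/m - real (card B) / m) \<ge> 0"
      using lam_pos be by simp
    then have TB: "T B \<ge> 0" using T_Om[OF BI] B(3) by linarith
    have fS: "finite S" using finS[OF less.prems] .
    have "S - B \<subset> S" using B(1) B(2) i0 by blast
    then have "card (S - B) < card S" using fS by (rule psubset_card_mono[rotated])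
    moreover have "S - B \<subseteq> I" using less.prems by blast
    ultimately have TSB: "T (S - B) \<ge> 0" using less.hyps by blast
    have "lam * real (card (XX B \<inter> XX (S - B))) \<ge> 0" using lam_pos by simp
    then show ?thesis using split[OF less.prems B(1) B(4)] TB TSB by linarith
  qed
qed

lemma T_pos_aux:
  assumes B: "B \<subseteq> I" "i0 \<in> B" "Om B \<ge> 0" "\<forall>j\<in>I-B. card (HV j \<inter> UV B) \<le> 1"
    and alt: "card (ZZ B) \<ge> 3 \<or> XX B \<inter> XX (I - B) \<noteq> {}"
  shows "T I > 0"
proof -
  have Bne: "B \<noteq> {}" using B(2) by blast
  have sp: "T I = T B + T (I - B) + lam * real (card (XX B \<inter> XX (I - B)))"
    by (rule split[OF order_refl B(1) B(4)])
  have TIB: "T (I - B) \<ge> 0" by (rule T_nonneg) blast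
  have be: "real (card (ZZ B)) - 2 + 1/m - real (card B) / m \<ge> 0" by (rule beta_nonneg(1)[OF B(1) Bne])
  have "lam * (real (card (ZZ B)) - 2 + 1/m - real (card B) / m) \<ge> 0"
    using lam_pos be by simp
  then have TB: "T B \<ge> 0" using T_Om[OF B(1)] B(3) by linarith
  show ?thesis
  proof (cases "card (ZZ B) \<ge> 3")
    case True
    have "real (card (ZZ B)) - 2 + 1/m - real (card B) / m > 0" by (rule beta_nonneg(2)[OF B(1) Bne True])
    then have "lam * (real (card (ZZ B)) - 2 + 1/m - real (card B) / m) > 0"
      using lam_pos by simp
    then have "T B > 0" using T_Om[OF B(1)] B(3) by linarith
    moreover have "lam * real (card (XX B \<inter> XX (I - B))) \<ge> 0" using lam_pos by simp
    ultimately show ?thesis using sp TIB by linarith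
  next
    case False
    then have ne: "XX B \<inter> XX (I - B) \<noteq> {}" using alt by blast
    have "finite (XX B)" using finUV[OF B(1)] unfolding XX_def by simp
    then have "card (XX B \<inter> XX (I - B)) > 0" using ne by (simp add: card_gt_0_iff)
    then have "lam * real (card (XX B \<inter> XX (I - B))) > 0" using lam_pos by simp
    then show ?thesis using sp TIB TB by linarith
  qed
qed

lemma T_pos: assumes "\<not> SL" shows "T I > 0"
proof -
  have "(\<exists>i\<in>I. HV i \<inter> Z \<noteq> fe i) \<or> (\<exists>i\<in>I. \<exists>j\<in>I. i \<noteq> j \<and> (HV i - Z) \<inter> (HV j - Z) \<noteq> {})"
    using assms unfolding SL_def by blast
  then show ?thesis
  proof
    assume "\<exists>i\<in>I. HV i \<inter> Z \<noteq> fe i"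
    then obtain i0 where i0: "i0 \<in> I" "HV i0 \<inter> Z \<noteq> fe i0" by blast
    obtain B where B: "B \<subseteq> I" "i0 \<in> B" "Om B \<ge> 0" "\<forall>j\<in>I-B. card (HV j \<inter> UV B) \<le> 1"
      using decomp[OF order_refl i0(1)] by blast
    have s1: "fe i0 \<subseteq> HV i0 \<inter> Z" using HEsub[OF i0(1) fe_in[OF i0(1)]] fe_Z[OF i0(1)] by blast
    then have ps: "fe i0 \<subset> HV i0 \<inter> Z" using i0(2) by blast
    have s2: "HV i0 \<inter> Z \<subseteq> ZZ B" unfolding ZZ_def UV_def using B(2) by blast
    have finZZ: "finite (ZZ B)" using finUV[OF B(1)] unfolding ZZ_def by simp
    have "card (fe i0) < card (HV i0 \<inter> Z)" by (rule psubset_card_mono[OF _ ps]) (use finHV[OF i0(1)] in simp)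
    moreover have "card (HV i0 \<inter> Z) \<le> card (ZZ B)" by (rule card_mono[OF finZZ s2])
    ultimately have "card (ZZ B) \<ge> 3" using card_fe[OF i0(1)] by linarith
    then show ?thesis using T_pos_aux[OF B] by blast
  next
    assume "\<exists>i\<in>I. \<exists>j\<in>I. i \<noteq> j \<and> (HV i - Z) \<inter> (HV j - Z) \<noteq> {}"
    then obtain i0 j0 x where ij: "i0 \<in> I" "j0 \<in> I" "i0 \<noteq> j0" and x: "x \<in> HV i0" "x \<in> HV j0" "x \<notin> Z" by blast
    obtain B where B: "B \<subseteq> I" "i0 \<in> B" "Om B \<ge> 0" "\<forall>j\<in>I-B. card (HV j \<inter> UV B) \<le> 1"
      using decomp[OF order_refl ij(1)] by blast
    show ?thesis
    proof (cases "j0 \<in> B")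
      case True
      have finZZ: "finite (ZZ B)" using finUV[OF B(1)] unfolding ZZ_def by simp
      have sub: "fe i0 \<union> fe j0 \<subseteq> ZZ B" using fe_sub_ZZ[OF B(1) B(2)] fe_sub_ZZ[OF B(1) True] by blast
      have neq: "fe i0 \<noteq> fe j0" using fe_inj ij unfolding inj_on_def by blast
      have "\<not> fe j0 \<subseteq> fe i0"
      proof
        assume "fe j0 \<subseteq> fe i0"
        then have "fe j0 = fe i0"
          by (rule card_subset_eq[rotated]) (simp_all add: card_fe[OF ij(1)] card_fe[OF ij(2)] fin_fe[OF ij(1)])
        then show False using neq by simp
      qed
      then have ps: "fe i0 \<subset> fe i0 \<union> fe j0" by blast
      have "card (fe i0) < card (fe i0 \<union> fe j0)"
        by (rule psubset_card_mono[OF _ ps]) (use finite_subset[OF sub finZZ] in simp)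
      moreover have "card (fe i0 \<union> fe j0) \<le> card (ZZ B)" by (rule card_mono[OF finZZ sub])
      ultimately have "card (ZZ B) \<ge> 3" using card_fe[OF ij(1)] by linarith
      then show ?thesis using T_pos_aux[OF B] by blast
    next
      case False
      have "x \<in> XX B" unfolding XX_def UV_def using x B(2) by blast
      moreover have "x \<in> XX (I - B)" unfolding XX_def UV_def using x ij(2) False by blast
      ultimately show ?thesis using T_pos_aux[OF B] by blast
    qed
  qed
qed

lemma T_star: assumes sl: SL shows "S \<subseteq> I \<Longrightarrow> T S = 0"
proof (induction "card S" arbitrary: S rule: less_induct)
  case less
  show ?case
  proof (cases "S = {}")
    case True then show ?thesis using T_empty by simp
  next
    case False
    then obtain i0 where i0: "i0 \<in> S" by blast
    have i0I: "i0 \<in> I" using i0 less.prems by blast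
    have hz: "\<And>i. i \<in> I \<Longrightarrow> HV i \<inter> Z = fe i" using sl unfolding SL_def by blast
    have hx: "\<And>i j. i \<in> I \<Longrightarrow> j \<in> I \<Longrightarrow> i \<noteq> j \<Longrightarrow> (HV i - Z) \<inter> (HV j - Z) = {}"
      using sl unfolding SL_def by blast
    have uv: "UV {i0} = HV i0" unfolding UV_def by simp
    have cl: "\<forall>j\<in>S-{i0}. card (HV j \<inter> UV {i0}) \<le> 1"
    proof
      fix j assume j: "j \<in> S - {i0}"
      have jI: "j \<in> I" using j less.prems by blast
      have sub: "HV j \<inter> HV i0 \<subseteq> fe j \<inter> fe i0"
      proof
        fix y assume y: "y \<in> HV j \<inter> HV i0"
        have "j \<noteq> i0" using j by blast
        then have "(HV j - Z) \<inter> (HV i0 - Z) = {}" by (rule hx[OF jI i0I])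
        then have "y \<in> Z" using y by blast
        then show "y \<in> fe j \<inter> fe i0" using hz[OF jI] hz[OF i0I] y by blast
      qed
      have c1: "card (fe j \<inter> fe i0) \<le> 1"
      proof (rule ccontr)
        assume "\<not> ?thesis"
        then have c: "card (fe j \<inter> fe i0) \<ge> 2" by linarith
        have fj: "finite (fe j)" by (rule fin_fe[OF jI])
        have fi: "finite (fe i0)" by (rule fin_fe[OF i0I])
        have c1: "card (fe j \<inter> fe i0) \<le> 2" using card_mono[OF fj, of "fe j \<inter> fe i0"] card_fe[OF jI] by simp
        have "fe j \<inter> fe i0 = fe j" by (rule card_subset_eq[OF fj]) (simp, use c c1 card_fe[OF jI] in linarith)
        moreover have "fe j \<inter> fe i0 = fe i0" by (rule card_subset_eq[OF fi]) (simp, use c c1 card_fe[OF i0I] in linarith)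
        ultimately have "fe j = fe i0" by simp
        then show False using fe_inj jI i0I j unfolding inj_on_def by blast
      qed
      have fin: "finite (fe j \<inter> fe i0)" using fin_fe[OF jI] by blast
      have "card (HV j \<inter> HV i0) \<le> card (fe j \<inter> fe i0)" by (rule card_mono[OF fin sub])
      then show "card (HV j \<inter> UV {i0}) \<le> 1" unfolding uv using c1 by linarith
    qed
    have sp: "T S = T {i0} + T (S - {i0}) + lam * real (card (XX {i0} \<inter> XX (S - {i0})))"
      by (rule split[OF less.prems _ cl]) (use i0 in blast)
    have e0: "XX {i0} \<inter> XX (S - {i0}) = {}"
    proof (rule ccontr)
      assume "XX {i0} \<inter> XX (S - {i0}) \<noteq> {}"
      then obtain y j where y: "y \<in> HV i0" "y \<notin> Z" "j \<in> S - {i0}" "y \<in> HV j"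
        unfolding XX_def UV_def by blast
      have jI: "j \<in> I" using y(3) less.prems by blast
      have "j \<noteq> i0" using y(3) by blast
      then have "(HV i0 - Z) \<inter> (HV j - Z) = {}" using hx[OF i0I jI] by metis
      then show False using y by blast
    qed
    have zz: "ZZ {i0} = fe i0" unfolding ZZ_def uv using hz[OF i0I] .
    have T0: "T {i0} = 0"
    proof -
      have "T {i0} = Om {i0} + lam * (real (card (ZZ {i0})) - 2 + 1/m - real (card {i0}) / m)"
        by (rule T_Om) (use i0I in blast)
      also have "\<dots> = 0" unfolding Om_single[OF i0I] zz card_fe[OF i0I] by simp
      finally show ?thesis .
    qed
    have fS: "finite S" using finS[OF less.prems] .
    have "card (S - {i0}) < card S" by (rule card_Diff1_less[OF fS i0])
    moreover have "S - {i0} \<subseteq> I" using less.prems by blast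
    ultimately have "T (S - {i0}) = 0" by (rule less.hyps)
    then show ?thesis using sp e0 T0 by simp
  qed
qed

end


lemma wf_edge: "wf_graph G \<Longrightarrow> e \<in> edges G \<Longrightarrow> e \<subseteq> verts G \<and> card e = 2"
  unfolding wf_graph_def by blast

lemma wf_fin: "wf_graph G \<Longrightarrow> finite (verts G)"
  unfolding wf_graph_def by blast

lemma wf_fin_edges: "wf_graph G \<Longrightarrow> finite (edges G)"
proof -
  assume w: "wf_graph G"
  have "edges G \<subseteq> Pow (verts G)" using wf_edge[OF w] by blast
  then show ?thesis using wf_fin[OF w] finite_subset by blast
qed

lemma pullback:
  assumes iso: "iso G H" and wG: "wf_graph G" and wH: "wf_graph H"
    and W: "W \<subseteq> verts H" and EK: "EK \<subseteq> edges H" and sub: "\<forall>e\<in>EK. e \<subseteq> W"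
  shows "\<exists>K. subgraph K G \<and> vnum K = card W \<and> enum K = card EK"
proof -
  obtain \<phi> where bij: "bij_betw \<phi> (verts G) (verts H)"
    and ed: "\<forall>u\<in>verts G. \<forall>v\<in>verts G. {u, v} \<in> edges G \<longleftrightarrow> {\<phi> u, \<phi> v} \<in> edges H"
    using iso unfolding iso_def by blast
  define \<psi> where "\<psi> = inv_into (verts G) \<phi>"
  have bij\<psi>: "bij_betw \<psi> (verts H) (verts G)" unfolding \<psi>_def by (rule bij_betw_inv_into[OF bij])
  have inj\<psi>: "inj_on \<psi> (verts H)" using bij\<psi> bij_betw_def by blast
  have \<psi>in: "\<And>a. a \<in> verts H \<Longrightarrow> \<psi> a \<in> verts G" using bij\<psi> bij_betwE by blast
  have \<phi>\<psi>: "\<And>a. a \<in> verts H \<Longrightarrow> \<phi> (\<psi> a) = a" unfolding \<psi>_def using bij by (simp add: bij_betw_inv_into_right)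
  define K where "K = (\<psi> ` W, (\<lambda>e. \<psi> ` e) ` EK)"
  have vK: "verts K = \<psi> ` W" and eK: "edges K = (\<lambda>e. \<psi> ` e) ` EK" unfolding K_def verts_def edges_def by simp_all
  have cW: "card (\<psi> ` W) = card W" by (rule card_image[OF inj_on_subset[OF inj\<psi> W]])
  have injE: "inj_on (\<lambda>e. \<psi> ` e) EK"
  proof (rule inj_onI)
    fix a b assume a: "a \<in> EK" and b: "b \<in> EK" and eq: "\<psi> ` a = \<psi> ` b"
    have "a \<subseteq> verts H" "b \<subseteq> verts H" using a b EK wf_edge[OF wH] by blast+
    then show "a = b" using eq inj_on_image_eq_iff[OF inj\<psi>] by blast
  qed
  have cE: "card ((\<lambda>e. \<psi> ` e) ` EK) = card EK" by (rule card_image[OF injE])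
  have edgesK: "\<psi> ` e \<in> edges G \<and> card (\<psi> ` e) = 2 \<and> \<psi> ` e \<subseteq> \<psi> ` W" if e: "e \<in> EK" for e
  proof -
    have eH: "e \<in> edges H" using e EK by blast
    have es: "e \<subseteq> verts H" "card e = 2" using wf_edge[OF wH eH] by auto
    then obtain a b where ab: "e = {a, b}" "a \<noteq> b" by (auto simp: card_2_iff)
    have abH: "a \<in> verts H" "b \<in> verts H" using es ab by auto
    have "{\<phi> (\<psi> a), \<phi> (\<psi> b)} \<in> edges H" using \<phi>\<psi>[OF abH(1)] \<phi>\<psi>[OF abH(2)] eH ab by simp
    then have "{\<psi> a, \<psi> b} \<in> edges G" using ed \<psi>in[OF abH(1)] \<psi>in[OF abH(2)] by blast
    moreover have "\<psi> ` e = {\<psi> a, \<psi> b}" using ab by simp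
    moreover have "card (\<psi> ` e) = 2" using card_image[OF inj_on_subset[OF inj\<psi> es(1)]] es by simp
    moreover have "\<psi> ` e \<subseteq> \<psi> ` W" using sub e by blast
    ultimately show ?thesis by simp
  qed
  have finW: "finite W" using W wf_fin[OF wH] finite_subset by blast
  have wK: "wf_graph K" unfolding wf_graph_def vK eK
  proof (intro conjI ballI)
    show "finite (\<psi> ` W)" using finW by simp
  next
    fix x assume "x \<in> (\<lambda>e. \<psi> ` e) ` EK"
    then obtain e where e: "e \<in> EK" "x = \<psi> ` e" by blast
    show "x \<subseteq> \<psi> ` W" using edgesK[OF e(1)] e(2) by simp
  next
    fix x assume "x \<in> (\<lambda>e. \<psi> ` e) ` EK"
    then obtain e where e: "e \<in> EK" "x = \<psi> ` e" by blast
    show "card x = 2" using edgesK[OF e(1)] e(2) by simp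
  qed
  have vs: "verts K \<subseteq> verts G" unfolding vK
  proof
    fix x assume "x \<in> \<psi> ` W"
    then obtain a where a: "a \<in> W" "x = \<psi> a" by blast
    show "x \<in> verts G" using \<psi>in[of a] a W by blast
  qed
  have es: "edges K \<subseteq> edges G" unfolding eK
  proof
    fix x assume "x \<in> (\<lambda>e. \<psi> ` e) ` EK"
    then obtain e where e: "e \<in> EK" "x = \<psi> ` e" by blast
    show "x \<in> edges G" using edgesK[OF e(1)] e(2) by simp
  qed
  have "subgraph K G" unfolding subgraph_def using wK vs es by simp
  moreover have "vnum K = card W" unfolding vnum_def vK cW ..
  moreover have "enum K = card EK" unfolding enum_def eK cE ..
  ultimately show ?thesis by blast
qed

lemma iso_card:
  assumes iso: "iso G H" and wG: "wf_graph G" and wH: "wf_graph H"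
  shows "card (verts H) = card (verts G)" and "card (edges H) = card (edges G)"
proof -
  obtain \<phi> where bij: "bij_betw \<phi> (verts G) (verts H)"
    and ed: "\<forall>u\<in>verts G. \<forall>v\<in>verts G. {u, v} \<in> edges G \<longleftrightarrow> {\<phi> u, \<phi> v} \<in> edges H"
    using iso unfolding iso_def by blast
  show "card (verts H) = card (verts G)" using bij_betw_same_card[OF bij] by simp
  obtain K where K: "subgraph K G" "enum K = card (edges H)"
    using pullback[OF iso wG wH order_refl order_refl] wf_edge[OF wH] by blast
  have "card (edges H) \<le> card (edges G)"
    using K card_mono[OF wf_fin_edges[OF wG]] unfolding subgraph_def enum_def by metis
  moreover have "card (edges G) \<le> card (edges H)"
  proof (rule card_inj_on_le[of "\<lambda>e. \<phi> ` e"])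
    have inj: "inj_on \<phi> (verts G)" using bij bij_betw_def by blast
    show "inj_on (\<lambda>e. \<phi> ` e) (edges G)"
    proof (rule inj_onI)
      fix a b assume a: "a \<in> edges G" and b: "b \<in> edges G" and eq: "\<phi> ` a = \<phi> ` b"
      have "a \<subseteq> verts G" "b \<subseteq> verts G" using a b wf_edge[OF wG] by blast+
      then show "a = b" using eq inj_on_image_eq_iff[OF inj] by blast
    qed
    show "(\<lambda>e. \<phi> ` e) ` edges G \<subseteq> edges H"
    proof
      fix x assume "x \<in> (\<lambda>e. \<phi> ` e) ` edges G"
      then obtain e where e: "e \<in> edges G" "x = \<phi> ` e" by blast
      have es: "e \<subseteq> verts G" "card e = 2" using wf_edge[OF wG e(1)] by auto
      then obtain a b where ab: "e = {a, b}" by (auto simp: card_2_iff)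
      have "a \<in> verts G" "b \<in> verts G" using es ab by auto
      then have "{\<phi> a, \<phi> b} \<in> edges H" using ed e(1) ab by blast
      then show "x \<in> edges H" using e(2) ab by simp
    qed
    show "finite (edges H)" by (rule wf_fin_edges[OF wH])
  qed
  ultimately show "card (edges H) = card (edges G)" by simp
qed

lemma fin_subgraphs: "wf_graph H \<Longrightarrow> finite {J. subgraph J H}"
proof -
  assume w: "wf_graph H"
  have "{J. subgraph J H} \<subseteq> Pow (verts H) \<times> Pow (edges H)"
    unfolding subgraph_def verts_def edges_def by (auto simp: mem_Times_iff)
  then show ?thesis using wf_fin[OF w] wf_fin_edges[OF w] finite_subset by blast
qed

lemma self_subgraph: "wf_graph H \<Longrightarrow> subgraph H H" unfolding subgraph_def by simp

lemma m2_H2: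
  assumes w: "wf_graph H2" and sb: "strictly_2_balanced H2" and m1: "m2 H2 > 1"
  shows "vnum H2 \<ge> 3" "nonempty_graph H2" "m2 H2 = (real (enum H2) - 1) / (real (vnum H2) - 2)"
proof -
  have fin: "finite (d2 ` {J. subgraph J H2})" using fin_subgraphs[OF w] by simp
  have ne: "d2 ` {J. subgraph J H2} \<noteq> {}" using self_subgraph[OF w] by blast
  have "m2 H2 \<in> d2 ` {J. subgraph J H2}" unfolding m2_def by (rule Max_in[OF fin ne])
  then obtain J where J: "subgraph J H2" "d2 J = m2 H2" by (metis (no_types, lifting) image_iff mem_Collect_eq)
  have "J = H2"
  proof (rule ccontr)
    assume "J \<noteq> H2"
    then have "d2 J < m2 H2" using sb J(1) unfolding strictly_2_balanced_def by blast
    then show False using J(2) by simp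
  qed
  then have d: "d2 H2 = m2 H2" using J(2) by simp
  have c: "nonempty_graph H2 \<and> vnum H2 \<ge> 3"
  proof (rule ccontr)
    assume "\<not> ?thesis"
    then have "d2 H2 \<le> 1/2" unfolding d2_def by auto
    then show False using d m1 by simp
  qed
  then show "vnum H2 \<ge> 3" "nonempty_graph H2" by auto
  show "m2 H2 = (real (enum H2) - 1) / (real (vnum H2) - 2)" using d c unfolding d2_def by simp
qed

lemma vnum_ge2: "wf_graph H \<Longrightarrow> nonempty_graph H \<Longrightarrow> vnum H \<ge> 2"
proof -
  assume w: "wf_graph H" and ne: "nonempty_graph H"
  obtain e where e: "e \<in> edges H" using ne unfolding nonempty_graph_def by blast
  have "e \<subseteq> verts H" "card e = 2" using wf_edge[OF w e] by auto
  then show ?thesis unfolding vnum_def using card_mono[OF wf_fin[OF w]] by metis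
qed

lemma enum_ge1: "wf_graph H \<Longrightarrow> nonempty_graph H \<Longrightarrow> enum H \<ge> 1"
proof -
  assume w: "wf_graph H" and ne: "nonempty_graph H"
  have "card (edges H) \<noteq> 0" using ne wf_fin_edges[OF w] unfolding nonempty_graph_def by simp
  then show ?thesis unfolding enum_def by simp
qed

lemma m2_asym_H1:
  assumes w: "wf_graph H1" and ne1: "nonempty_graph H1" and ne2: "nonempty_graph H2"
    and sb: "strictly_balanced_wrt H1 H2"
  shows "m2_asym H1 H2 = real (enum H1) / (real (vnum H1) - 2 + 1 / m2 H2)"
    and "\<And>J. subgraph J H1 \<Longrightarrow> d2_asym J H2 \<le> m2_asym H1 H2"
proof -
  have fin: "finite ((\<lambda>J. d2_asym J H2) ` {J. subgraph J H1})" using fin_subgraphs[OF w] by simp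
  have ne: "(\<lambda>J. d2_asym J H2) ` {J. subgraph J H1} \<noteq> {}" using self_subgraph[OF w] by blast
  show "\<And>J. subgraph J H1 \<Longrightarrow> d2_asym J H2 \<le> m2_asym H1 H2"
    unfolding m2_asym_def using fin by (intro Max_ge) auto
  have "m2_asym H1 H2 \<in> (\<lambda>J. d2_asym J H2) ` {J. subgraph J H1}" unfolding m2_asym_def by (rule Max_in[OF fin ne])
  then obtain J where J: "subgraph J H1" "d2_asym J H2 = m2_asym H1 H2" by (metis (no_types, lifting) image_iff mem_Collect_eq)
  have "J = H1"
  proof (rule ccontr)
    assume "J \<noteq> H1"
    then have "d2_asym J H2 < m2_asym H1 H2" using sb J(1) unfolding strictly_balanced_wrt_def by blast
    then show False using J(2) by simp
  qed
  then have "d2_asym H1 H2 = m2_asym H1 H2" using J(2) by simp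
  then show "m2_asym H1 H2 = real (enum H1) / (real (vnum H1) - 2 + 1 / m2 H2)"
    unfolding d2_asym_def using ne2 vnum_ge2[OF w ne1] by simp
qed


lemma constr_facts:
  assumes c: "construction F eh H1 H2 J Hh Hf"
  shows "wf_graph Hh" "iso H2 Hh" "edges Hh \<inter> edges F = {eh}" "verts Hh \<inter> verts F = eh"
    "\<And>f. f \<in> edges Hh - {eh} \<Longrightarrow> wf_graph (Hf f)"
    "\<And>f. f \<in> edges Hh - {eh} \<Longrightarrow> iso H1 (Hf f)"
    "\<And>f. f \<in> edges Hh - {eh} \<Longrightarrow> edges (Hf f) \<inter> (edges F \<union> edges Hh) = {f}"
    "\<And>f. f \<in> edges Hh - {eh} \<Longrightarrow> (verts F - eh) \<inter> verts (Hf f) = {}"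
    "J = (verts F \<union> verts Hh \<union> (\<Union>f \<in> edges Hh - {eh}. verts (Hf f)),
          edges F \<union> edges Hh \<union> (\<Union>f \<in> edges Hh - {eh}. edges (Hf f)))"
  using c unfolding construction_def by blast+

lemma constr_flower:
  assumes w1: "wf_graph H1" and w2: "wf_graph H2" and ne1: "nonempty_graph H1" and ne2: "nonempty_graph H2"
    and m1: "m2 H2 > 1" and s2: "strictly_2_balanced H2" and s1: "strictly_balanced_wrt H1 H2"
    and c: "construction F eh H1 H2 J Hh Hf"
  shows "flower (edges Hh - {eh}) (verts Hh) (\<lambda>f. verts (Hf f)) (\<lambda>f. edges (Hf f)) id
           (m2_asym H1 H2) (m2 H2) (vnum H1) (enum H1)"
proof -
  note cf = constr_facts[OF c]
  define I where "I = edges Hh - {eh}"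
  define lam where "lam = m2_asym H1 H2"
  define m where "m = m2 H2"
  have mpos: "m > 0" using m1 unfolding m_def by simp
  have v1: "vnum H1 \<ge> 2" by (rule vnum_ge2[OF w1 ne1])
  have e1: "enum H1 \<ge> 1" by (rule enum_ge1[OF w1 ne1])
  have im: "1/m > 0" using mpos by simp
  have den: "real (vnum H1) - 2 + 1/m > 0" using v1 im by linarith
  have lamq: "lam = real (enum H1) / (real (vnum H1) - 2 + 1/m)"
    unfolding lam_def m_def by (rule m2_asym_H1(1)[OF w1 ne1 ne2 s1])
  have lpos: "lam > 0" unfolding lamq using den e1 by simp
  have e1q: "real (enum H1) = lam * (real (vnum H1) - 2 + 1/m)" unfolding lamq using den by simp
  have fe_in: "\<And>i. i \<in> I \<Longrightarrow> i \<in> edges (Hf i)" using cf(7) unfolding I_def by blast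
  have bound: "real (card EK) \<le> lam * (real (card W) - 2 + 1/m)"
    if i: "i \<in> I" and W: "W \<subseteq> verts (Hf i)" and EK: "EK \<subseteq> edges (Hf i)" and sub: "\<forall>e\<in>EK. e \<subseteq> W"
      and cW: "card W \<ge> 2" for i W EK
  proof -
    have wi: "wf_graph (Hf i)" using cf(5) i unfolding I_def by blast
    have isoi: "iso H1 (Hf i)" using cf(6) i unfolding I_def by blast
    obtain K where K: "subgraph K H1" "vnum K = card W" "enum K = card EK"
      using pullback[OF isoi w1 wi W EK sub] by blast
    have le: "d2_asym K H2 \<le> lam" unfolding lam_def by (rule m2_asym_H1(2)[OF w1 ne1 ne2 s1 K(1)])
    have "d2_asym K H2 = real (card EK) / (real (card W) - 2 + 1/m)"
      unfolding d2_asym_def m_def using ne2 K(2,3) cW by simp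
    moreover have "real (card W) - 2 + 1/m > 0" using cW im by linarith
    ultimately show ?thesis using le by (simp add: pos_divide_le_eq)
  qed
  have H2b: "real (card S) - 1 < m * (real (card ((\<Union>f\<in>S. verts (Hf f)) \<inter> verts Hh)) - 2)"
    if S: "S \<subseteq> I" "S \<noteq> {}" and c3: "card ((\<Union>f\<in>S. verts (Hf f)) \<inter> verts Hh) \<ge> 3" for S
  proof -
    define W where "W = (\<Union>f\<in>S. verts (Hf f)) \<inter> verts Hh"
    have SE: "S \<subseteq> edges Hh" using S unfolding I_def by blast
    have sub: "\<forall>e\<in>S. e \<subseteq> W"
    proof
      fix e assume e: "e \<in> S"
      have eI: "e \<in> I" using e S by blast
      have "e \<subseteq> verts (Hf e)" using wf_edge[OF cf(5) fe_in[OF eI]] eI unfolding I_def by blast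
      moreover have "e \<subseteq> verts Hh" using wf_edge[OF cf(1)] SE e by blast
      ultimately show "e \<subseteq> W" unfolding W_def using e by blast
    qed
    obtain K where K: "subgraph K H2" "vnum K = card W" "enum K = card S"
      using pullback[OF cf(2) w2 cf(1) _ SE sub] unfolding W_def by blast
    have finE: "finite (edges Hh)" by (rule wf_fin_edges[OF cf(1)])
    have ehH: "eh \<in> edges Hh" using cf(3) by blast
    have "card S \<le> card I" using card_mono[of I S] finE S unfolding I_def by blast
    also have "card I = card (edges Hh) - 1" unfolding I_def using ehH finE by simp
    also have "card (edges Hh) = enum H2" unfolding enum_def by (rule iso_card(2)[OF cf(2) w2 cf(1)])
    finally have "card S < enum H2" using ehH finE card_gt_0_iff[of "edges Hh"] iso_card(2)[OF cf(2) w2 cf(1)]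
      unfolding enum_def by fastforce
    then have "K \<noteq> H2" using K(3) by auto
    then have lt: "d2 K < m" using s2 K(1) unfolding strictly_2_balanced_def m_def by blast
    have finS: "finite S" using finite_subset[OF SE finE] .
    have "card S > 0" using finS S(2) by (simp add: card_gt_0_iff)
    then have neK: "nonempty_graph K" using K(3) unfolding nonempty_graph_def enum_def by auto
    have d: "d2 K = (real (card S) - 1) / (real (card W) - 2)"
      unfolding d2_def using neK K(2,3) c3 unfolding W_def by simp
    have "real (card W) - 2 > 0" using c3 unfolding W_def by simp
    then show ?thesis using lt d unfolding W_def by (simp add: pos_divide_less_eq mult.commute)
  qed
  show ?thesis
  proof (unfold_locales, goal_cases)
    case 1 show ?case using wf_fin_edges[OF cf(1)] by simp
  next
    case 2 show ?case by (rule wf_fin[OF cf(1)])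
  next
    case (3 i) then show ?case using wf_fin[OF cf(5)] by blast
  next
    case (4 i) then show ?case using iso_card(1)[OF cf(6) w1 cf(5)] unfolding vnum_def by blast
  next
    case (5 i) then show ?case using iso_card(2)[OF cf(6) w1 cf(5)] unfolding enum_def by blast
  next
    case (6 i e) then show ?case using wf_edge[OF cf(5)] by blast
  next
    case (7 i) then show ?case using fe_in unfolding I_def by simp
  next
    case (8 i) then show ?case using wf_edge[OF cf(1)] by simp
  next
    case 9 show ?case by simp
  next
    case (10 i W EK) then show ?case using bound unfolding I_def lam_def m_def by blast
  next
    case 11 show ?case using e1q unfolding lam_def m_def .
  next
    case (12 S) then show ?case using H2b unfolding I_def m_def by blast
  next
    case 13 show ?case using lpos unfolding lam_def .
  next
    case 14 show ?case using mpos unfolding m_def .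
  qed
qed

lemma constr_counts:
  assumes wF: "wf_graph F" and eh: "eh \<in> edges F" and c: "construction F eh H1 H2 J Hh Hf"
  shows "eplus F J = card (\<Union>f\<in>edges Hh - {eh}. edges (Hf f))"
    and "vplus F J = (card (verts Hh) - 2) + card ((\<Union>f\<in>edges Hh - {eh}. verts (Hf f)) - verts Hh)"
proof -
  note cf = constr_facts[OF c]
  have Jv: "verts J = verts F \<union> verts Hh \<union> (\<Union>f \<in> edges Hh - {eh}. verts (Hf f))"
    using cf(9) unfolding verts_def by simp
  have Je: "edges J = edges F \<union> edges Hh \<union> (\<Union>f \<in> edges Hh - {eh}. edges (Hf f))"
    using cf(9) unfolding edges_def by simp
  have ehF: "eh \<subseteq> verts F" "card eh = 2" using wf_edge[OF wF eh] by auto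
  have "edges J - edges F = (\<Union>f\<in>edges Hh - {eh}. edges (Hf f))"
  proof
    show "edges J - edges F \<subseteq> (\<Union>f\<in>edges Hh - {eh}. edges (Hf f))"
    proof
      fix x assume x: "x \<in> edges J - edges F"
      show "x \<in> (\<Union>f\<in>edges Hh - {eh}. edges (Hf f))"
      proof (cases "x \<in> edges Hh")
        case True
        then have xI: "x \<in> edges Hh - {eh}" using x eh by auto
        then have "x \<in> edges (Hf x)" using cf(7)[OF xI] by blast
        then show ?thesis using xI by blast
      next
        case False then show ?thesis using x unfolding Je by blast
      qed
    qed
    show "(\<Union>f\<in>edges Hh - {eh}. edges (Hf f)) \<subseteq> edges J - edges F"
    proof
      fix x assume "x \<in> (\<Union>f\<in>edges Hh - {eh}. edges (Hf f))"
      then obtain f where f: "f \<in> edges Hh - {eh}" "x \<in> edges (Hf f)" by blast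
      have "x \<notin> edges F"
      proof
        assume xF: "x \<in> edges F"
        then have "x = f" using cf(7)[OF f(1)] f(2) by blast
        then have "f \<in> edges Hh \<inter> edges F" using f xF by blast
        then show False using cf(3) f(1) by blast
      qed
      then show "x \<in> edges J - edges F" using f unfolding Je by blast
    qed
  qed
  then show "eplus F J = card (\<Union>f\<in>edges Hh - {eh}. edges (Hf f))" unfolding eplus_def by simp
  define UV where "UV = (\<Union>f\<in>edges Hh - {eh}. verts (Hf f))"
  have ehH: "eh \<subseteq> verts Hh" using cf(4) by blast
  have eqv: "verts J - verts F = (verts Hh - eh) \<union> (UV - verts Hh)"
  proof
    show "verts J - verts F \<subseteq> (verts Hh - eh) \<union> (UV - verts Hh)"
      unfolding Jv UV_def using ehF(1) by blast
    show "(verts Hh - eh) \<union> (UV - verts Hh) \<subseteq> verts J - verts F"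
    proof
      fix x assume x: "x \<in> (verts Hh - eh) \<union> (UV - verts Hh)"
      show "x \<in> verts J - verts F"
      proof (cases "x \<in> verts Hh")
        case True
        then have "x \<notin> verts F" using x cf(4) by blast
        then show ?thesis unfolding Jv using True by blast
      next
        case False
        then obtain f where f: "f \<in> edges Hh - {eh}" "x \<in> verts (Hf f)" using x unfolding UV_def by blast
        have "x \<notin> verts F" using cf(8)[OF f(1)] f(2) False ehH by blast
        then show ?thesis unfolding Jv using f by blast
      qed
    qed
  qed
  have finH: "finite (verts Hh)" by (rule wf_fin[OF cf(1)])
  have finUV: "finite UV" unfolding UV_def using wf_fin[OF cf(5)] wf_fin_edges[OF cf(1)] by blast
  have "card (verts J - verts F) = card (verts Hh - eh) + card (UV - verts Hh)"
    unfolding eqv by (rule card_Un_disjoint) (use finH finUV in auto)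
  moreover have "card (verts Hh - eh) = card (verts Hh) - 2"
    using card_Diff_subset[OF finite_subset[OF ehH finH] ehH] ehF(2) by simp
  ultimately show "vplus F J = (card (verts Hh) - 2) + card ((\<Union>f\<in>edges Hh - {eh}. verts (Hf f)) - verts Hh)"
    unfolding vplus_def UV_def by simp
qed

lemma star_to_SL:
  assumes c: "construction F eh H1 H2 J Hh Hf" and st: "star_conditions eh Hh Hf"
  shows "(\<forall>i\<in>edges Hh - {eh}. verts (Hf i) \<inter> verts Hh = id i) \<and>
   (\<forall>i\<in>edges Hh - {eh}. \<forall>j\<in>edges Hh - {eh}. i \<noteq> j \<longrightarrow> (verts (Hf i) - verts Hh) \<inter> (verts (Hf j) - verts Hh) = {})"
proof -
  note cf = constr_facts[OF c]
  have a: "\<forall>f\<in>edges Hh - {eh}. (verts (Hf f) - f) \<inter> verts Hh = {}" using st unfolding star_conditions_def by blast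
  have b: "\<forall>f1\<in>edges Hh - {eh}. \<forall>f2\<in>edges Hh - {eh}. f1 \<noteq> f2 \<longrightarrow> (verts (Hf f1) - f1) \<inter> (verts (Hf f2) - f2) = {}"
    using st unfolding star_conditions_def by blast
  have fsub: "f \<subseteq> verts (Hf f) \<and> f \<subseteq> verts Hh" if f: "f \<in> edges Hh - {eh}" for f
  proof -
    have "f \<in> edges (Hf f)" using cf(7)[OF f] by blast
    then show ?thesis using wf_edge[OF cf(5)[OF f]] wf_edge[OF cf(1)] f by blast
  qed
  show ?thesis
  proof (intro conjI ballI impI)
    fix i assume i: "i \<in> edges Hh - {eh}"
    show "verts (Hf i) \<inter> verts Hh = id i" using a i fsub[OF i] by auto
  next
    fix i j assume i: "i \<in> edges Hh - {eh}" and j: "j \<in> edges Hh - {eh}" and ij: "i \<noteq> j"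
    have "(verts (Hf i) - i) \<inter> (verts (Hf j) - j) = {}" using b i j ij by blast
    then show "(verts (Hf i) - verts Hh) \<inter> (verts (Hf j) - verts Hh) = {}"
      using fsub[OF i] fsub[OF j] by blast
  qed
qed

lemma SL_to_star:
  assumes c: "construction F eh H1 H2 J Hh Hf"
    and sl: "(\<forall>i\<in>edges Hh - {eh}. verts (Hf i) \<inter> verts Hh = id i) \<and>
   (\<forall>i\<in>edges Hh - {eh}. \<forall>j\<in>edges Hh - {eh}. i \<noteq> j \<longrightarrow> (verts (Hf i) - verts Hh) \<inter> (verts (Hf j) - verts Hh) = {})"
  shows "star_conditions eh Hh Hf"
proof -
  note cf = constr_facts[OF c]
  have hz: "\<And>i. i \<in> edges Hh - {eh} \<Longrightarrow> verts (Hf i) \<inter> verts Hh = i" using sl by simp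
  have hx: "\<And>i j. i \<in> edges Hh - {eh} \<Longrightarrow> j \<in> edges Hh - {eh} \<Longrightarrow> i \<noteq> j \<Longrightarrow>
      (verts (Hf i) - verts Hh) \<inter> (verts (Hf j) - verts Hh) = {}" using sl by blast
  have U: "(verts (Hf f1) - f1) \<inter> (verts (Hf f2) - f2) = {}"
    if f1: "f1 \<in> edges Hh - {eh}" and f2: "f2 \<in> edges Hh - {eh}" and ne: "f1 \<noteq> f2" for f1 f2
  proof (rule ccontr)
    assume "\<not> ?thesis"
    then obtain x where x: "x \<in> verts (Hf f1)" "x \<notin> f1" "x \<in> verts (Hf f2)" "x \<notin> f2" by blast
    have "x \<notin> verts Hh" using hz[OF f1] x by blast
    then show False using hx[OF f1 f2 ne] x by blast
  qed
  have D: "(edges (Hf f1) - {f1}) \<inter> (edges (Hf f2) - {f2}) = {}"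
    if f1: "f1 \<in> edges Hh - {eh}" and f2: "f2 \<in> edges Hh - {eh}" and ne: "f1 \<noteq> f2" for f1 f2
  proof (rule ccontr)
    assume "\<not> ?thesis"
    then obtain e where e: "e \<in> edges (Hf f1)" "e \<noteq> f1" "e \<in> edges (Hf f2)" by blast
    have e1: "e \<subseteq> verts (Hf f1)" "card e = 2" using wf_edge[OF cf(5)[OF f1] e(1)] by auto
    have e2: "e \<subseteq> verts (Hf f2)" using wf_edge[OF cf(5)[OF f2] e(3)] by auto
    have "e \<subseteq> verts Hh"
    proof
      fix x assume xe: "x \<in> e"
      show "x \<in> verts Hh"
      proof (rule ccontr)
        assume "x \<notin> verts Hh"
        then show False using hx[OF f1 f2 ne] xe e1 e2 by blast
      qed
    qed
    then have sub: "e \<subseteq> f1" using hz[OF f1] e1 by blast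
    have f1c: "card f1 = 2" using wf_edge[OF cf(1)] f1 by blast
    have "finite f1" using f1c by (intro card_ge_0_finite) simp
    then have "e = f1" using card_subset_eq[OF _ sub] e1(2) f1c by simp
    then show False using e(2) by simp
  qed
  show ?thesis unfolding star_conditions_def
  proof (intro conjI ballI impI)
    fix f1 f2 assume "f1 \<in> edges Hh - {eh}" "f2 \<in> edges Hh - {eh}" "f1 \<noteq> f2"
    then show "(verts (Hf f1) - f1) \<inter> (verts (Hf f2) - f2) = {}"
      and "(edges (Hf f1) - {f1}) \<inter> (edges (Hf f2) - {f2}) = {}" using U D by blast+
  next
    fix f assume f: "f \<in> edges Hh - {eh}"
    show "(verts (Hf f) - f) \<inter> verts Hh = {}" using hz[OF f] by blast
  qed
qed

theorem lemma6p1: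
  fixes H1 H2 :: "'b graph" and F J Jstar :: "'a graph" and eh :: "'a set"
  assumes "wf_graph H1" "wf_graph H2" "nonempty_graph H1" "nonempty_graph H2"
    and "H1 \<noteq> H2"
    and "m2 H1 > m2 H2" "m2 H2 > 1"
    and "strictly_2_balanced H2"
    and "strictly_balanced_wrt H1 H2"
    and "wf_graph F" "eh \<in> edges F"
    and "J \<in> family_H F eh H1 H2 - family_Hstar F eh H1 H2"
    and "Jstar \<in> family_Hstar F eh H1 H2"
  shows "real (eplus F J) / real (vplus F J) > real (eplus F Jstar) / real (vplus F Jstar)"
proof -
  obtain Hh Hf where cJ: "construction F eh H1 H2 J Hh Hf"
    using assms(12) unfolding family_H_def by blast
  have nst: "\<not> star_conditions eh Hh Hf"
    using assms(12) cJ unfolding family_Hstar_def by blast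
  obtain Hh' Hf' where cS: "construction F eh H1 H2 Jstar Hh' Hf'" and st: "star_conditions eh Hh' Hf'"
    using assms(13) unfolding family_Hstar_def by blast
  define lam where "lam = m2_asym H1 H2"
  define m where "m = m2 H2"
  interpret A: flower "edges Hh - {eh}" "verts Hh" "\<lambda>f. verts (Hf f)" "\<lambda>f. edges (Hf f)" id lam m "vnum H1" "enum H1"
    unfolding lam_def m_def by (rule constr_flower[OF assms(1,2,3,4,7,8,9) cJ])
  interpret B: flower "edges Hh' - {eh}" "verts Hh'" "\<lambda>f. verts (Hf' f)" "\<lambda>f. edges (Hf' f)" id lam m "vnum H1" "enum H1"
    unfolding lam_def m_def by (rule constr_flower[OF assms(1,2,3,4,7,8,9) cS])
  have nSL: "\<not> A.SL"
  proof
    assume "A.SL"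
    then have "star_conditions eh Hh Hf" using SL_to_star[OF cJ] unfolding A.SL_def by blast
    then show False using nst by blast
  qed
  have SLB: "B.SL" using star_to_SL[OF cS st] unfolding B.SL_def by blast
  have TA: "A.T (edges Hh - {eh}) > 0" by (rule A.T_pos[OF nSL])
  have TB: "B.T (edges Hh' - {eh}) = 0" by (rule B.T_star[OF SLB order_refl])
  have H2f: "vnum H2 \<ge> 3" "m = (real (enum H2) - 1) / (real (vnum H2) - 2)"
    using m2_H2[OF assms(2,8,7)] unfolding m_def by auto
  have mpos: "m > 1" using assms(7) unfolding m_def .
  have psi: "real (eplus F K) - lam * real (vplus F K) =
      real (card (\<Union>f\<in>edges Hk - {eh}. edges (Hk' f)))
      - lam * real (card ((\<Union>f\<in>edges Hk - {eh}. verts (Hk' f)) - verts Hk))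
      - lam * real (card (edges Hk - {eh})) / m"
    and vpos: "real (vplus F K) > 0"
    if cK: "construction F eh H1 H2 K Hk Hk'" for K Hk Hk'
  proof -
    note cf = constr_facts[OF cK]
    have cnt1: "eplus F K = card (\<Union>f\<in>edges Hk - {eh}. edges (Hk' f))" by (rule constr_counts(1)[OF assms(10,11) cK])
    have cnt2: "vplus F K = (card (verts Hk) - 2) + card ((\<Union>f\<in>edges Hk - {eh}. verts (Hk' f)) - verts Hk)"
      by (rule constr_counts(2)[OF assms(10,11) cK])
    have cv: "card (verts Hk) = vnum H2" using iso_card(1)[OF cf(2) assms(2) cf(1)] unfolding vnum_def .
    have ce: "card (edges Hk) = enum H2" using iso_card(2)[OF cf(2) assms(2) cf(1)] unfolding enum_def .
    have ehH: "eh \<in> edges Hk" using cf(3) by blast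
    have finE: "finite (edges Hk)" by (rule wf_fin_edges[OF cf(1)])
    have cI: "card (edges Hk - {eh}) = enum H2 - 1" using ce ehH finE by simp
    have en1: "enum H2 \<ge> 1" using ce ehH finE card_gt_0_iff[of "edges Hk"] by fastforce
    have d: "real (vnum H2) - 2 > 0" using H2f(1) by simp
    have rI: "real (card (edges Hk - {eh})) = real (enum H2) - 1" using cI en1 by simp
    have q: "real (card (edges Hk - {eh})) / m = real (vnum H2) - 2"
    proof -
      have "real (enum H2) - 1 = m * (real (vnum H2) - 2)" using H2f(2) d by simp
      moreover have "m \<noteq> 0" using mpos by simp
      ultimately show ?thesis unfolding rI by simp
    qed
    have rv: "real (vplus F K) = real (vnum H2) - 2 + real (card ((\<Union>f\<in>edges Hk - {eh}. verts (Hk' f)) - verts Hk))"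
      unfolding cnt2 cv using H2f(1) by simp
    show "real (eplus F K) - lam * real (vplus F K) =
      real (card (\<Union>f\<in>edges Hk - {eh}. edges (Hk' f)))
      - lam * real (card ((\<Union>f\<in>edges Hk - {eh}. verts (Hk' f)) - verts Hk))
      - lam * real (card (edges Hk - {eh})) / m"
    proof -
      have q2: "lam * real (card (edges Hk - {eh})) / m = lam * (real (vnum H2) - 2)"
        by (simp only: times_divide_eq_right[symmetric] q)
      show ?thesis unfolding rv cnt1 q2 by (simp add: algebra_simps)
    qed
    show "real (vplus F K) > 0" unfolding rv using d by simp
  qed
  have eA: "real (eplus F J) - lam * real (vplus F J) = A.T (edges Hh - {eh})"
    unfolding psi[OF cJ] A.T_def A.UE_def A.XX_def A.UV_def by simp
  have eB: "real (eplus F Jstar) - lam * real (vplus F Jstar) = B.T (edges Hh' - {eh})"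
    unfolding psi[OF cS] B.T_def B.UE_def B.XX_def B.UV_def by simp
  have vJ: "real (vplus F J) > 0" by (rule vpos[OF cJ])
  have vS: "real (vplus F Jstar) > 0" by (rule vpos[OF cS])
  have r1: "real (eplus F Jstar) / real (vplus F Jstar) = lam"
    using eB TB vS by (simp add: divide_eq_eq)
  have "real (eplus F J) > lam * real (vplus F J)" using eA TA by simp
  then have "real (eplus F J) / real (vplus F J) > lam" using vJ by (simp add: pos_less_divide_eq mult.commute)
  then show ?thesis using r1 by simp
qed

end
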